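(* If a $\star$-metric space $(X,d^\star)$ has a dense subset $M$ (dense in $(X,\mathscr{T}_{d^\star})$) such that $(M,d^\star|_{M\times M})$ is totally bounded, then $(X,d^\star)$ is totally bounded.
   Context: A $t$-definer is a function $\star:[0,\infty)\times[0,\infty)\to[0,\infty)$ such that for all $a,b,c\ge 0$: $a\star b=b\star a$; $a\star(b\star c)=(a\star b)\star c$; if $a\le b$ then $a\star c\le b\star c$; $a\star 0=a$; and $\star$ is continuous in its first variable with respect to the Euclidean topology. Given a nonempty set $X$ and a $t$-definer $\star$, a $\star$-metric on $X$ is a function $d^\star:X\times X\to[0,\infty)$ such that for all $x,y,z\in X$: $d^\star(x,y)=0$ iff $x=y$; $d^\star(x,y)=d^\star(y,x)$; and $d^\star(x,y)\le d^\star(x,z)\star d^\star(z,y)$. Let $\mathscr{T}_{d^\star}$ be the topology consisting of all $U\subseteq X$ such that for each $a\in U$ there is $r>0$ with $\{x: d^\star(a,x)<r\}\subseteq U$. A $\star$-metric space $(Y,\rho)$ is totally bounded if for every $\epsilon>0$ there is a finite $F\subseteq Y$ with $Y=\bigcup_{x\in F}\{y\in Y:\rho(x,y)<\epsilon\}$. *)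

theory Defs
  imports "HOL-Analysis.Analysis"
begin

text \<open>A t-definer: a binary operation on [0,oo), given as a real function
  whose behaviour is only constrained on nonnegative arguments.\<close>
definition t_definer :: "(real \<Rightarrow> real \<Rightarrow> real) \<Rightarrow> bool" where
  "t_definer s \<longleftrightarrow>
     (\<forall>a\<ge>0. \<forall>b\<ge>0. s a b \<ge> 0) \<and>
     (\<forall>a\<ge>0. \<forall>b\<ge>0. s a b = s b a) \<and>
     (\<forall>a\<ge>0. \<forall>b\<ge>0. \<forall>c\<ge>0. s a (s b c) = s (s a b) c) \<and>
     (\<forall>a\<ge>0. \<forall>b\<ge>0. \<forall>c\<ge>0. a \<le> b \<longrightarrow> s a c \<le> s b c) \<and>
     (\<forall>a\<ge>0. s a 0 = a) \<and>
     (\<forall>c\<ge>0. continuous_on {0..} (\<lambda>a. s a c))"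

definition star_metric :: "(real \<Rightarrow> real \<Rightarrow> real) \<Rightarrow> 'a set \<Rightarrow> ('a \<Rightarrow> 'a \<Rightarrow> real) \<Rightarrow> bool" where
  "star_metric s X d \<longleftrightarrow>
     (\<forall>x\<in>X. \<forall>y\<in>X. d x y \<ge> 0) \<and>
     (\<forall>x\<in>X. \<forall>y\<in>X. d x y = 0 \<longleftrightarrow> x = y) \<and>
     (\<forall>x\<in>X. \<forall>y\<in>X. d x y = d y x) \<and>
     (\<forall>x\<in>X. \<forall>y\<in>X. \<forall>z\<in>X. d x y \<le> s (d x z) (d z y))"

definition star_open :: "'a set \<Rightarrow> ('a \<Rightarrow> 'a \<Rightarrow> real) \<Rightarrow> 'a set \<Rightarrow> bool" where
  "star_open X d U \<longleftrightarrow> U \<subseteq> X \<and> (\<forall>a\<in>U. \<exists>r>0. {x\<in>X. d a x < r} \<subseteq> U)"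

definition star_dense :: "'a set \<Rightarrow> ('a \<Rightarrow> 'a \<Rightarrow> real) \<Rightarrow> 'a set \<Rightarrow> bool" where
  "star_dense X d M \<longleftrightarrow> M \<subseteq> X \<and> (\<forall>U. star_open X d U \<and> U \<noteq> {} \<longrightarrow> U \<inter> M \<noteq> {})"

definition star_totally_bounded :: "'a set \<Rightarrow> ('a \<Rightarrow> 'a \<Rightarrow> real) \<Rightarrow> bool" where
  "star_totally_bounded Y d \<longleftrightarrow>
     (\<forall>e>0. \<exists>F. finite F \<and> F \<subseteq> Y \<and> Y = (\<Union>x\<in>F. {y\<in>Y. d x y < e}))"

end

theory Submission
  imports Defs
begin

lemma tdef_nn: "t_definer s \<Longrightarrow> a\<ge>0 \<Longrightarrow> b\<ge>0 \<Longrightarrow> s a b \<ge> 0" unfolding t_definer_def by simp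
lemma tdef_cm: "t_definer s \<Longrightarrow> a\<ge>0 \<Longrightarrow> b\<ge>0 \<Longrightarrow> s a b = s b a" unfolding t_definer_def by (elim conjE) (erule allE[of _ a], erule allE[of _ b], simp)
lemma tdef_mo: "t_definer s \<Longrightarrow> a\<ge>0 \<Longrightarrow> b\<ge>0 \<Longrightarrow> c\<ge>0 \<Longrightarrow> a \<le> b \<Longrightarrow> s a c \<le> s b c" unfolding t_definer_def by simp
lemma tdef_0: "t_definer s \<Longrightarrow> a\<ge>0 \<Longrightarrow> s a 0 = a" unfolding t_definer_def by (elim conjE) (erule allE[of _ a], simp)
lemma tdef_co: "t_definer s \<Longrightarrow> c\<ge>0 \<Longrightarrow> continuous_on {0..} (\<lambda>a. s a c)" unfolding t_definer_def by simp
lemma sm: "star_metric s X d \<Longrightarrow> x \<in> X \<Longrightarrow> y \<in> X \<Longrightarrow> d x y \<ge> 0 \<and> (d x y = 0 \<longleftrightarrow> x = y) \<and> d x y = d y x" unfolding star_metric_def by simp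
lemma smt: "star_metric s X d \<Longrightarrow> x \<in> X \<Longrightarrow> y \<in> X \<Longrightarrow> z \<in> X \<Longrightarrow> d x y \<le> s (d x z) (d z y)" unfolding star_metric_def by (elim conjE) (drule bspec[of _ _ x], simp, drule bspec[of _ _ y], simp, drule bspec[of _ _ z], simp_all)

lemma tdef_cont0:
  assumes "t_definer s" "c \<ge> 0" "\<epsilon> > 0"
  shows "\<exists>r>0. \<forall>a. 0 \<le> a \<and> a < r \<longrightarrow> s a c < c + \<epsilon>"
proof -
  have co: "continuous_on {0..} (\<lambda>a. s a c)" using assms(1,2) by (rule tdef_co)
  have s0: "s 0 c = c" using tdef_0[OF assms(1,2)] tdef_cm[OF assms(1), of 0 c] assms(2) by simp
  from co have "\<forall>\<epsilon>>0. \<exists>r>0. \<forall>a\<in>{0..}. dist a 0 < r \<longrightarrow> dist (s a c) (s 0 c) < \<epsilon>"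
    using bspec[OF co[unfolded continuous_on_iff], of 0] by simp
  then have "\<exists>r>0. \<forall>a\<in>{0..}. dist a 0 < r \<longrightarrow> dist (s a c) (s 0 c) < \<epsilon>"
    using assms(3) by blast
  then obtain r where r: "r > 0" "\<forall>a\<in>{0..}. dist a 0 < r \<longrightarrow> dist (s a c) (s 0 c) < \<epsilon>" by blast
  show ?thesis
  proof (intro exI[of _ r] conjI allI impI)
    fix a :: real assume "0 \<le> a \<and> a < r"
    then have "dist (s a c) c < \<epsilon>" using r s0 by (auto simp: dist_real_def)
    then show "s a c < c + \<epsilon>" by (auto simp: dist_real_def)
  qed (use r in auto)
qed

theorem corollary3p6:
  fixes s :: "real \<Rightarrow> real \<Rightarrow> real" and X M :: "'a set" and d :: "'a \<Rightarrow> 'a \<Rightarrow> real"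
  assumes "X \<noteq> {}"
    and "t_definer s"
    and "star_metric s X d"
    and "star_dense X d M"
    and "star_totally_bounded M d"
  shows "star_totally_bounded X d"
  unfolding star_totally_bounded_def
proof (intro allI impI)
  fix e :: real assume e: "e > 0"
  note nn = tdef_nn[OF assms(2)] and cm = tdef_cm[OF assms(2)] and mo = tdef_mo[OF assms(2)]
  have dnn: "\<And>x y. x \<in> X \<Longrightarrow> y \<in> X \<Longrightarrow> d x y \<ge> 0"
    and d0: "\<And>x y. x \<in> X \<Longrightarrow> y \<in> X \<Longrightarrow> d x y = 0 \<longleftrightarrow> x = y"
    and dsym: "\<And>x y. x \<in> X \<Longrightarrow> y \<in> X \<Longrightarrow> d x y = d y x"
    using sm[OF assms(3)] by blast+
  note tri = smt[OF assms(3)]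
  have MX: "M \<subseteq> X" using assms(4) unfolding star_dense_def by simp
  have "\<exists>r>0. \<forall>t. 0 \<le> t \<and> t < r \<longrightarrow> s t (e/2) < e/2 + e/2"
    by (rule tdef_cont0[OF assms(2)]) (use e in simp_all)
  then obtain a where a: "a > 0" "\<forall>t. 0 \<le> t \<and> t < a \<longrightarrow> s t (e/2) < e/2 + e/2"
    by metis
  define \<delta> where "\<delta> = min (a/2) (e/2)"
  have dp: "\<delta> > 0" using a e by (simp add: \<delta>_def)
  have d1: "\<delta> \<le> e/2" "\<delta> < a" using a(1) by (simp_all add: \<delta>_def)
  have sdd: "s \<delta> \<delta> < e"
  proof -
    have "s \<delta> \<delta> \<le> s (e/2) \<delta>" by (rule mo) (use dp d1 e in simp_all)
    also have "\<dots> = s \<delta> (e/2)" by (rule cm) (use dp e in simp_all)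
    also have "\<dots> < e" using a(2)[rule_format, of \<delta>] dp d1 by linarith
    finally show ?thesis .
  qed
  have "\<exists>F. finite F \<and> F \<subseteq> M \<and> M = (\<Union>x\<in>F. {y\<in>M. d x y < \<delta>})"
    using mp[OF spec[OF assms(5)[unfolded star_totally_bounded_def], of \<delta>] dp] .
  then obtain F where F: "finite F" "F \<subseteq> M" "M = (\<Union>x\<in>F. {y\<in>M. d x y < \<delta>})"
    by metis
  have cover: "x \<in> (\<Union>f\<in>F. {y\<in>X. d f y < e})" if x: "x \<in> X" for x
  proof -
    define U where "U = {y\<in>X. d x y < \<delta>}"
    have "star_open X d U"
      unfolding star_open_def
    proof (intro conjI ballI)
      show "U \<subseteq> X" by (auto simp: U_def)
      fix y assume y: "y \<in> U"
      then have yX: "y \<in> X" and dxy: "d x y < \<delta>" by (auto simp: U_def)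
      have dxy0: "d x y \<ge> 0" using dnn[OF x yX] .
      obtain r where r: "r > 0" "\<forall>t. 0 \<le> t \<and> t < r \<longrightarrow> s t (d x y) < d x y + (\<delta> - d x y)"
        using tdef_cont0[OF assms(2) dxy0, of "\<delta> - d x y"] dxy by auto
      show "\<exists>r>0. {z\<in>X. d y z < r} \<subseteq> U"
      proof (intro exI[of _ r] conjI subsetI)
        fix z assume z: "z \<in> {z\<in>X. d y z < r}"
        then have zX: "z \<in> X" and dyz: "d y z < r" by auto
        have "d x z \<le> s (d x y) (d y z)" by (rule tri[OF x zX yX])
        also have "\<dots> = s (d y z) (d x y)" using cm[of "d x y" "d y z"] dnn[OF x yX] dnn[OF yX zX] by simp
        also have "\<dots> < \<delta>" using r(2) dyz dnn[OF yX zX] by auto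
        finally show "z \<in> U" using zX by (simp add: U_def)
      qed (use r in auto)
    qed
    moreover have "x \<in> U" using x d0[OF x x] dp by (simp add: U_def)
    ultimately have "U \<inter> M \<noteq> {}" using assms(4) unfolding star_dense_def by blast
    then obtain m where m: "m \<in> M" "d x m < \<delta>" by (auto simp: U_def)
    have "m \<in> (\<Union>x\<in>F. {y\<in>M. d x y < \<delta>})" using m(1) F(3) by simp
    then obtain f where f: "f \<in> F" "d f m < \<delta>" by blast
    have mX: "m \<in> X" and fX: "f \<in> X" using m f F(2) MX by auto
    have "d f x \<le> s (d f m) (d m x)" by (rule tri[OF fX x mX])
    also have "\<dots> \<le> s \<delta> (d m x)" using mo[of "d f m" \<delta> "d m x"] f dnn[OF fX mX] dnn[OF mX x] dp by simp
    also have "\<dots> = s (d m x) \<delta>" using cm[of \<delta> "d m x"] dnn[OF mX x] dp by simp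
    also have "\<dots> \<le> s \<delta> \<delta>" using mo[of "d m x" \<delta> \<delta>] m dsym[OF mX x] dnn[OF mX x] dp by simp
    also have "\<dots> < e" by (rule sdd)
    finally show ?thesis using f x by blast
  qed
  show "\<exists>F. finite F \<and> F \<subseteq> X \<and> X = (\<Union>x\<in>F. {y\<in>X. d x y < e})"
  proof (intro exI[of _ F] conjI)
    show "F \<subseteq> X" using F(2) MX by (rule subset_trans)
    show "X = (\<Union>x\<in>F. {y\<in>X. d x y < e})"
    proof
      show "X \<subseteq> (\<Union>x\<in>F. {y\<in>X. d x y < e})" using cover by (rule subsetI)
    qed blast
  qed (rule F(1))
qed

end
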